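(* Let $H\subseteq G$ be non-abelian simple groups such that the inclusion $H\subseteq G$ is a localization. Assume $G$ and $\mathrm{Aut}(G)$ are co-hopfian, $\mathrm{Aut}(H)$ is complete, and $\mathrm{Out}(G)$ is hyperabelian. Let $j\colon\mathrm{Aut}(H)\to\mathrm{Aut}(G)$ be an injective homomorphism with $j(c_h)=c_h^G$ for all $h\in H$. Let $N=j^{-1}(\mathrm{Inn}(G))$, let $k\colon\mathrm{Out}(H)\to\mathrm{Out}(G)$ be induced by $j$, and let $\pi\colon\mathrm{Out}(H)\to\mathrm{Aut}(H)/N$ be the canonical projection. Consider the conditions: (b) the only $\theta\in\mathrm{Aut}(\mathrm{Aut}(G))$ with $\theta\circ j=j$ is the identity; (c) for every homomorphism $\varphi'\colon\mathrm{Aut}(H)/N\to\mathrm{Aut}(G)$ there exists a unique homomorphism $\psi'\colon\mathrm{Out}(G)\to\mathrm{Aut}(G)$ with $\psi'\circ k=\varphi'\circ\pi$; (d) every homomorphism $\varphi\colon\mathrm{Aut}(H)\to\mathrm{Aut}(G)$ with $\mathrm{Inn}(H)\subseteq\ker\varphi$ satisfies $N\subseteq\ker\varphi$. Then $j$ is a localization if and only if (b), (c) and (d) hold. If in addition $\mathrm{Aut}(G)$ is complete, then $j$ is a localization if and only if (c) and (d) hold.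
   Context: A group homomorphism $i\colon X\to Y$ is a localization if for every homomorphism $\varphi\colon X\to Y$ there exists a unique homomorphism $\psi\colon Y\to Y$ with $\psi\circ i=\varphi$; for $H\subseteq G$, "$H\subseteq G$ is a localization" means the inclusion map is. A group is co-hopfian if every injective endomorphism is an automorphism; complete if it has trivial center and every automorphism is inner. A group $A$ is hyperabelian if every non-trivial quotient of $A$ has a non-trivial abelian normal subgroup. For $h\in H\subseteq G$, $c_h$ is conjugation by $h$ on $H$ and $c_h^G$ is conjugation by $h$ on $G$. $\mathrm{Out}(X)=\mathrm{Aut}(X)/\mathrm{Inn}(X)$. *)

theory Defs
  imports "HOL-Algebra.Algebra"
begin

definition group_conj :: "('a, 'b) monoid_scheme \<Rightarrow> 'a \<Rightarrow> ('a \<Rightarrow> 'a)" where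
  "group_conj G g = (\<lambda>x \<in> carrier G. g \<otimes>\<^bsub>G\<^esub> x \<otimes>\<^bsub>G\<^esub> inv\<^bsub>G\<^esub> g)"

definition Inn :: "('a, 'b) monoid_scheme \<Rightarrow> ('a \<Rightarrow> 'a) set" where
  "Inn G = group_conj G ` carrier G"

definition Out :: "('a, 'b) monoid_scheme \<Rightarrow> ('a \<Rightarrow> 'a) set monoid" where
  "Out G = AutoGroup G Mod Inn G"

definition unique_factorization ::
  "('a, 'm) monoid_scheme \<Rightarrow> ('b, 'n) monoid_scheme \<Rightarrow> ('c, 'o) monoid_scheme
   \<Rightarrow> ('a \<Rightarrow> 'b) \<Rightarrow> ('a \<Rightarrow> 'c) \<Rightarrow> bool" where
  "unique_factorization XX YY ZZ i phi \<longleftrightarrow>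
     (\<exists>psi \<in> hom YY ZZ. (\<forall>x \<in> carrier XX. psi (i x) = phi x) \<and>
        (\<forall>psi' \<in> hom YY ZZ. (\<forall>x \<in> carrier XX. psi' (i x) = phi x) \<longrightarrow>
            (\<forall>y \<in> carrier YY. psi' y = psi y)))"

definition localization :: "('a, 'm) monoid_scheme \<Rightarrow> ('b, 'n) monoid_scheme \<Rightarrow> ('a \<Rightarrow> 'b) \<Rightarrow> bool" where
  "localization XX YY i \<longleftrightarrow> i \<in> hom XX YY \<and> (\<forall>phi \<in> hom XX YY. unique_factorization XX YY YY i phi)"

definition cohopfian :: "('a, 'm) monoid_scheme \<Rightarrow> bool" where
  "cohopfian G \<longleftrightarrow> (\<forall>f \<in> hom G G. inj_on f (carrier G) \<longrightarrow> f ` carrier G = carrier G)"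

definition group_center :: "('a, 'm) monoid_scheme \<Rightarrow> 'a set" where
  "group_center G = {z \<in> carrier G. \<forall>x \<in> carrier G. z \<otimes>\<^bsub>G\<^esub> x = x \<otimes>\<^bsub>G\<^esub> z}"

definition complete_group :: "('a, 'm) monoid_scheme \<Rightarrow> bool" where
  "complete_group G \<longleftrightarrow> group G \<and> group_center G = {\<one>\<^bsub>G\<^esub>} \<and> carrier (AutoGroup G) \<subseteq> Inn G"

definition simple_grp :: "('a, 'm) monoid_scheme \<Rightarrow> bool" where
  "simple_grp G \<longleftrightarrow> group G \<and> carrier G \<noteq> {\<one>\<^bsub>G\<^esub>} \<and>
     (\<forall>N. N \<lhd> G \<longrightarrow> N = carrier G \<or> N = {\<one>\<^bsub>G\<^esub>})"

definition nonabelian :: "('a, 'm) monoid_scheme \<Rightarrow> bool" where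
  "nonabelian G \<longleftrightarrow> (\<exists>x \<in> carrier G. \<exists>y \<in> carrier G. x \<otimes>\<^bsub>G\<^esub> y \<noteq> y \<otimes>\<^bsub>G\<^esub> x)"

definition hyperabelian :: "('a, 'm) monoid_scheme \<Rightarrow> bool" where
  "hyperabelian A \<longleftrightarrow> group A \<and>
     (\<forall>N. N \<lhd> A \<longrightarrow> N \<noteq> carrier A \<longrightarrow>
        (\<exists>M. M \<lhd> (A Mod N) \<and> M \<noteq> {\<one>\<^bsub>A Mod N\<^esub>} \<and>
             (\<forall>x \<in> M. \<forall>y \<in> M. x \<otimes>\<^bsub>A Mod N\<^esub> y = y \<otimes>\<^bsub>A Mod N\<^esub> x)))"

end

theory Submission
  imports Defs
begin


context group begin

lemma Aut_carrier: "carrier (AutoGroup G) = auto G"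
  by (simp add: AutoGroup_def)

lemma Aut_elem:
  assumes "a \<in> carrier (AutoGroup G)"
  shows "a \<in> hom G G" "a \<in> extensional (carrier G)" "bij_betw a (carrier G) (carrier G)"
  using assms by (auto simp: AutoGroup_def auto_def Bij_def)

lemma Aut_mult:
  assumes "a \<in> carrier (AutoGroup G)" "b \<in> carrier (AutoGroup G)"
  shows "a \<otimes>\<^bsub>AutoGroup G\<^esub> b = compose (carrier G) a b"
  using assms by (auto simp: AutoGroup_def BijGroup_def auto_def)

lemma Aut_mult_app:
  assumes "a \<in> carrier (AutoGroup G)" "b \<in> carrier (AutoGroup G)" "x \<in> carrier G"
  shows "(a \<otimes>\<^bsub>AutoGroup G\<^esub> b) x = a (b x)"
  using assms by (simp add: Aut_mult compose_def)

lemma Aut_one: "\<one>\<^bsub>AutoGroup G\<^esub> = (\<lambda>x\<in>carrier G. x)"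
  by (simp add: AutoGroup_def BijGroup_def)

lemma Aut_eq:
  assumes "a \<in> carrier (AutoGroup G)" "b \<in> carrier (AutoGroup G)" "\<And>x. x \<in> carrier G \<Longrightarrow> a x = b x"
  shows "a = b"
  using Aut_elem(2)[OF assms(1)] Aut_elem(2)[OF assms(2)] assms(3) by (rule extensionalityI)

lemma Aut_app_closed:
  assumes "a \<in> carrier (AutoGroup G)" "x \<in> carrier G"
  shows "a x \<in> carrier G"
  using Aut_elem(1)[OF assms(1)] assms(2) by (simp add: hom_in_carrier)

lemma Aut_inv_app:
  assumes "a \<in> carrier (AutoGroup G)" "x \<in> carrier G"
  shows "a ((inv\<^bsub>AutoGroup G\<^esub> a) x) = x" "(inv\<^bsub>AutoGroup G\<^esub> a) (a x) = x"
proof -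
  interpret A: group "AutoGroup G" by (rule AutoGroup)
  have i: "inv\<^bsub>AutoGroup G\<^esub> a \<in> carrier (AutoGroup G)" using assms by simp
  have "(a \<otimes>\<^bsub>AutoGroup G\<^esub> inv\<^bsub>AutoGroup G\<^esub> a) x = x"
    using assms by (simp add: Aut_one)
  then show "a ((inv\<^bsub>AutoGroup G\<^esub> a) x) = x" using Aut_mult_app[OF assms(1) i assms(2)] by simp
  have "(inv\<^bsub>AutoGroup G\<^esub> a \<otimes>\<^bsub>AutoGroup G\<^esub> a) x = x"
    using assms by (simp add: Aut_one)
  then show "(inv\<^bsub>AutoGroup G\<^esub> a) (a x) = x" using Aut_mult_app[OF i assms(1) assms(2)] by simp
qed

lemma inv_cancel_aux [simp]: "g \<in> carrier G \<Longrightarrow> z \<in> carrier G \<Longrightarrow> inv g \<otimes> (g \<otimes> z) = z"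
  by (simp add: m_assoc[symmetric])

lemma inv_cancel_aux2 [simp]: "g \<in> carrier G \<Longrightarrow> z \<in> carrier G \<Longrightarrow> g \<otimes> (inv g \<otimes> z) = z"
  by (simp add: m_assoc[symmetric])

lemma conj_app: "x \<in> carrier G \<Longrightarrow> group_conj G g x = g \<otimes> x \<otimes> inv g"
  by (simp add: group_conj_def)

lemma conj_closed:
  assumes g: "g \<in> carrier G" shows "group_conj G g \<in> carrier (AutoGroup G)"
proof -
  have hom: "group_conj G g \<in> hom G G"
    by (rule homI) (use g in \<open>auto simp: group_conj_def m_assoc\<close>)
  have "bij_betw (group_conj G g) (carrier G) (carrier G)"
  proof (rule bij_betw_byWitness[where f'="group_conj G (inv g)"])
    show "\<forall>a\<in>carrier G. group_conj G (inv g) (group_conj G g a) = a"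
      using g by (simp add: group_conj_def m_assoc)
    show "\<forall>a\<in>carrier G. group_conj G g (group_conj G (inv g) a) = a"
      using g by (simp add: group_conj_def m_assoc)
    show "group_conj G g ` carrier G \<subseteq> carrier G" "group_conj G (inv g) ` carrier G \<subseteq> carrier G"
      using g by (auto simp: group_conj_def)
  qed
  then show ?thesis using hom
    by (simp add: AutoGroup_def auto_def Bij_def group_conj_def)
qed

lemma conj_hom: "group_conj G \<in> hom G (AutoGroup G)"
proof (rule homI)
  fix x assume "x \<in> carrier G" then show "group_conj G x \<in> carrier (AutoGroup G)" by (rule conj_closed)
next
  fix x y assume xy: "x \<in> carrier G" "y \<in> carrier G"
  show "group_conj G (x \<otimes> y) = group_conj G x \<otimes>\<^bsub>AutoGroup G\<^esub> group_conj G y"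
  proof (rule Aut_eq)
    interpret A: group "AutoGroup G" by (rule AutoGroup)
    show "group_conj G (x \<otimes> y) \<in> carrier (AutoGroup G)" using xy by (simp add: conj_closed)
    show "group_conj G x \<otimes>\<^bsub>AutoGroup G\<^esub> group_conj G y \<in> carrier (AutoGroup G)"
      using xy by (simp add: conj_closed)
    fix z assume z: "z \<in> carrier G"
    then show "group_conj G (x \<otimes> y) z = (group_conj G x \<otimes>\<^bsub>AutoGroup G\<^esub> group_conj G y) z"
      using xy by (simp add: Aut_mult_app conj_closed conj_app inv_mult_group m_assoc)
  qed
qed

lemma conj_one: "group_conj G \<one> = \<one>\<^bsub>AutoGroup G\<^esub>"
  by (auto simp: group_conj_def Aut_one)

lemma conj_action:
  assumes a: "a \<in> carrier (AutoGroup G)" and u: "u \<in> carrier G"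
  shows "a \<otimes>\<^bsub>AutoGroup G\<^esub> group_conj G u \<otimes>\<^bsub>AutoGroup G\<^esub> inv\<^bsub>AutoGroup G\<^esub> a = group_conj G (a u)"
proof -
  interpret A: group "AutoGroup G" by (rule AutoGroup)
  have au: "a u \<in> carrier G" using a u by (rule Aut_app_closed)
  have ia: "inv\<^bsub>AutoGroup G\<^esub> a \<in> carrier (AutoGroup G)" using a by simp
  have hom: "a \<in> hom G G" using a by (rule Aut_elem)
  interpret ah: group_hom G G a by (simp add: group_hom_def group_hom_axioms_def hom is_group)
  show ?thesis
  proof (rule Aut_eq)
    show "a \<otimes>\<^bsub>AutoGroup G\<^esub> group_conj G u \<otimes>\<^bsub>AutoGroup G\<^esub> inv\<^bsub>AutoGroup G\<^esub> a \<in> carrier (AutoGroup G)"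
      using a u ia conj_closed by simp
    show "group_conj G (a u) \<in> carrier (AutoGroup G)" using au by (rule conj_closed)
    fix x assume x: "x \<in> carrier G"
    have iax: "(inv\<^bsub>AutoGroup G\<^esub> a) x \<in> carrier G" using ia x by (rule Aut_app_closed)
    have "(a \<otimes>\<^bsub>AutoGroup G\<^esub> group_conj G u \<otimes>\<^bsub>AutoGroup G\<^esub> inv\<^bsub>AutoGroup G\<^esub> a) x
        = a (u \<otimes> (inv\<^bsub>AutoGroup G\<^esub> a) x \<otimes> inv u)"
      using a u ia x iax conj_closed by (simp add: Aut_mult_app conj_app)
    also have "\<dots> = a u \<otimes> x \<otimes> inv (a u)"
      using hom u iax x Aut_inv_app[OF a x] by (simp add: ah.hom_mult ah.hom_inv)
    finally show "(a \<otimes>\<^bsub>AutoGroup G\<^esub> group_conj G u \<otimes>\<^bsub>AutoGroup G\<^esub> inv\<^bsub>AutoGroup G\<^esub> a) x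
        = group_conj G (a u) x" using x by (simp add: conj_app)
  qed
qed

lemma Inn_normal: "Inn G \<lhd> AutoGroup G"
proof -
  interpret A: group "AutoGroup G" by (rule AutoGroup)
  interpret h: group_hom G "AutoGroup G" "group_conj G"
    by (simp add: group_hom_def group_hom_axioms_def conj_hom is_group A.is_group)
  have sg: "subgroup (Inn G) (AutoGroup G)" unfolding Inn_def by (rule h.img_is_subgroup)
  show ?thesis
    unfolding A.normal_inv_iff
    using sg conj_action Aut_app_closed by (auto simp: Inn_def)
qed


lemma simple_normal: "simple_grp G \<Longrightarrow> N \<lhd> G \<Longrightarrow> N = carrier G \<or> N = {\<one>}"
  by (simp add: simple_grp_def)

lemma conj_kernel_trivial:
  assumes sG: "simple_grp G" and nG: "nonabelian G"
  shows "kernel G (AutoGroup G) (group_conj G) = {\<one>}"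
proof -
  interpret A: group "AutoGroup G" by (rule AutoGroup)
  interpret h: group_hom G "AutoGroup G" "group_conj G"
    by (simp add: group_hom_def group_hom_axioms_def conj_hom is_group A.is_group)
  have "kernel G (AutoGroup G) (group_conj G) \<noteq> carrier G"
  proof
    assume K: "kernel G (AutoGroup G) (group_conj G) = carrier G"
    from nG obtain x y where xy: "x \<in> carrier G" "y \<in> carrier G" "x \<otimes> y \<noteq> y \<otimes> x"
      by (auto simp: nonabelian_def)
    have "group_conj G x = \<one>\<^bsub>AutoGroup G\<^esub>" using K xy by (auto simp: kernel_def)
    then have "group_conj G x y = y" using xy by (simp add: Aut_one)
    then have "x \<otimes> y \<otimes> inv x = y" using xy by (simp add: conj_app)
    then have "x \<otimes> y \<otimes> inv x \<otimes> x = y \<otimes> x" by simp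
    then show False using xy by (simp add: m_assoc)
  qed
  then show ?thesis using simple_normal[OF sG h.normal_kernel] by blast
qed

lemma conj_inj:
  assumes "simple_grp G" "nonabelian G"
  shows "inj_on (group_conj G) (carrier G)"
proof -
  interpret A: group "AutoGroup G" by (rule AutoGroup)
  interpret h: group_hom G "AutoGroup G" "group_conj G"
    by (simp add: group_hom_def group_hom_axioms_def conj_hom is_group A.is_group)
  show ?thesis using h.inj_iff_trivial_ker conj_kernel_trivial[OF assms] by simp
qed

lemma kill_lemma:
  assumes sG: "simple_grp G" and XX: "group XX" and psi: "psi \<in> hom (AutoGroup G) XX"
    and H: "H \<subseteq> carrier G" and nt: "h0 \<in> H" "h0 \<noteq> \<one>"
    and kill: "\<And>h. h \<in> H \<Longrightarrow> psi (group_conj G h) = \<one>\<^bsub>XX\<^esub>"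
    and u: "u \<in> carrier G"
  shows "psi (group_conj G u) = \<one>\<^bsub>XX\<^esub>"
proof -
  interpret A: group "AutoGroup G" by (rule AutoGroup)
  have "psi \<circ> group_conj G \<in> hom G XX" using conj_hom psi by (rule Group.hom_compose)
  then interpret h: group_hom G XX "psi \<circ> group_conj G"
    by (simp add: group_hom_def group_hom_axioms_def is_group XX)
  have "h0 \<in> kernel G XX (psi \<circ> group_conj G)" using nt H kill by (auto simp: kernel_def)
  then have "kernel G XX (psi \<circ> group_conj G) = carrier G"
    using simple_normal[OF sG h.normal_kernel] nt by blast
  then show ?thesis using u by (auto simp: kernel_def)
qed

end

lemma preimage_normal:
  assumes XX: "group XX" and Y: "group Y" and f: "f \<in> hom XX Y" and M: "M \<lhd> Y"
  shows "{x \<in> carrier XX. f x \<in> M} \<lhd> XX"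
proof -
  interpret Y: group Y by (rule Y)
  interpret M: normal M Y by (rule M)
  have "(\<lambda>x. M #>\<^bsub>Y\<^esub> f x) \<in> hom XX (Y Mod M)"
    using f M.r_coset_hom_Mod by (rule Group.hom_compose[unfolded comp_def])
  then interpret h: group_hom XX "Y Mod M" "\<lambda>x. M #>\<^bsub>Y\<^esub> f x"
    by (simp add: group_hom_def group_hom_axioms_def XX M.factorgroup_is_group)
  have "kernel XX (Y Mod M) (\<lambda>x. M #>\<^bsub>Y\<^esub> f x) = {x \<in> carrier XX. f x \<in> M}"
  proof -
    have "M #>\<^bsub>Y\<^esub> f x = M \<longleftrightarrow> f x \<in> M" if x: "x \<in> carrier XX" for x
    proof -
      have fx: "f x \<in> carrier Y" using f x by (rule hom_in_carrier)
      show ?thesis using Y.coset_join1[OF _ fx M.subgroup_axioms] Y.coset_join2[OF fx M.subgroup_axioms] by blast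
    qed
    then show ?thesis unfolding kernel_def by auto
  qed
  then show ?thesis using h.normal_kernel by simp
qed

lemma quotient_factor:
  assumes XX: "group XX" and Y: "group Y" and K: "K \<lhd> XX" and f: "f \<in> hom XX Y"
    and kill: "\<And>k. k \<in> K \<Longrightarrow> f k = \<one>\<^bsub>Y\<^esub>"
  shows "(\<lambda>C. the_elem (f ` C)) \<in> hom (XX Mod K) Y"
    and "\<And>a. a \<in> carrier XX \<Longrightarrow> the_elem (f ` (K #>\<^bsub>XX\<^esub> a)) = f a"
proof -
  interpret XX: group XX by (rule XX)
  interpret Y: group Y by (rule Y)
  interpret K: normal K XX by (rule K)
  interpret f: group_hom XX Y f by (simp add: group_hom_def group_hom_axioms_def XX Y f)
  have img: "f ` (K #>\<^bsub>XX\<^esub> a) = {f a}" if a: "a \<in> carrier XX" for a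
  proof
    show "f ` (K #>\<^bsub>XX\<^esub> a) \<subseteq> {f a}"
      using a kill by (auto simp: r_coset_def K.subset[THEN subsetD])
    show "{f a} \<subseteq> f ` (K #>\<^bsub>XX\<^esub> a)"
      using a XX.rcos_self[OF a K.subgroup_axioms] by blast
  qed
  show ev: "the_elem (f ` (K #>\<^bsub>XX\<^esub> a)) = f a" if "a \<in> carrier XX" for a
    using img[OF that] by simp
  show "(\<lambda>C. the_elem (f ` C)) \<in> hom (XX Mod K) Y"
  proof (rule homI)
    fix C assume "C \<in> carrier (XX Mod K)"
    then obtain a where a: "a \<in> carrier XX" "C = K #>\<^bsub>XX\<^esub> a" by (auto simp: carrier_FactGroup)
    then show "the_elem (f ` C) \<in> carrier Y" using ev by simp
  next
    fix C D assume "C \<in> carrier (XX Mod K)" "D \<in> carrier (XX Mod K)"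
    then obtain a b where a: "a \<in> carrier XX" "C = K #>\<^bsub>XX\<^esub> a" and b: "b \<in> carrier XX" "D = K #>\<^bsub>XX\<^esub> b"
      by (auto simp: carrier_FactGroup)
    have "C \<otimes>\<^bsub>XX Mod K\<^esub> D = K #>\<^bsub>XX\<^esub> (a \<otimes>\<^bsub>XX\<^esub> b)" using a b by (simp add: K.rcos_sum)
    then show "the_elem (f ` (C \<otimes>\<^bsub>XX Mod K\<^esub> D)) = the_elem (f ` C) \<otimes>\<^bsub>Y\<^esub> the_elem (f ` D)"
      using a b ev by simp
  qed
qed

lemma coset_absorb:
  assumes XX: "group XX" and K: "subgroup K XX" and S: "S \<subseteq> K" "\<one>\<^bsub>XX\<^esub> \<in> S" and x: "x \<in> carrier XX"
  shows "K <#>\<^bsub>XX\<^esub> (S #>\<^bsub>XX\<^esub> x) = K #>\<^bsub>XX\<^esub> x"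
proof -
  interpret XX: group XX by (rule XX)
  have Kc: "K \<subseteq> carrier XX" using K by (rule subgroup.subset)
  have "K <#>\<^bsub>XX\<^esub> S = K"
  proof
    show "K <#>\<^bsub>XX\<^esub> S \<subseteq> K" using S K by (auto simp: set_mult_def subgroup.m_closed)
    show "K \<subseteq> K <#>\<^bsub>XX\<^esub> S"
    proof
      fix k assume "k \<in> K"
      then have "k = k \<otimes>\<^bsub>XX\<^esub> \<one>\<^bsub>XX\<^esub>" "k \<in> K" using Kc by auto
      then show "k \<in> K <#>\<^bsub>XX\<^esub> S" using S(2) unfolding set_mult_def by blast
    qed
  qed
  moreover have "K <#>\<^bsub>XX\<^esub> (S #>\<^bsub>XX\<^esub> x) = (K <#>\<^bsub>XX\<^esub> S) #>\<^bsub>XX\<^esub> x"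
    using Kc S Kc x by (intro XX.setmult_rcos_assoc) auto
  ultimately show ?thesis by simp
qed

lemma incl_hom: "subgroup H G \<Longrightarrow> (\<lambda>x. x) \<in> hom (G\<lparr>carrier := H\<rparr>) G"
  by (rule homI) (auto simp: subgroup.mem_carrier)

lemma loc_fix:
  assumes G: "group G" and sub: "subgroup H G"
    and loc: "localization (G\<lparr>carrier := H\<rparr>) G (\<lambda>x. x)"
    and b: "b \<in> carrier (AutoGroup G)" and fx: "\<And>h. h \<in> H \<Longrightarrow> b h = h"
  shows "b = \<one>\<^bsub>AutoGroup G\<^esub>"
proof -
  interpret G: group G by (rule G)
  have uf: "unique_factorization (G\<lparr>carrier := H\<rparr>) G G (\<lambda>x. x) (\<lambda>x. x)"
    using loc incl_hom[OF sub] by (auto simp: localization_def)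
  then obtain psi where psi: "psi \<in> hom G G"
    and un: "\<forall>psi' \<in> hom G G. (\<forall>x \<in> H. psi' x = x) \<longrightarrow> (\<forall>y \<in> carrier G. psi' y = psi y)"
    unfolding unique_factorization_def by auto
  have bh: "b \<in> hom G G" using b by (rule G.Aut_elem)
  have ih: "(\<lambda>x\<in>carrier G. x) \<in> hom G G" by (rule homI) auto
  have Hc: "H \<subseteq> carrier G" using sub by (rule subgroup.subset)
  have "\<forall>y \<in> carrier G. b y = psi y" using un bh fx by auto
  moreover have "\<forall>x\<in>H. (\<lambda>x\<in>carrier G. x) x = x" using Hc by auto
  then have "\<forall>y \<in> carrier G. (\<lambda>x\<in>carrier G. x) y = psi y" using un ih by blast
  ultimately show ?thesis
    using b by (intro G.Aut_eq) (auto simp: G.Aut_one G.id_in_auto G.Aut_carrier)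
qed



lemma union_chain_normal:
  assumes A: "group A" and ne: "CC \<noteq> {}" and nor: "\<And>M. M \<in> CC \<Longrightarrow> M \<lhd> A"
    and ch: "\<And>M1 M2. M1 \<in> CC \<Longrightarrow> M2 \<in> CC \<Longrightarrow> M1 \<subseteq> M2 \<or> M2 \<subseteq> M1"
  shows "\<Union>CC \<lhd> A"
proof -
  interpret A: group A by (rule A)
  have sgM: "\<And>M. M \<in> CC \<Longrightarrow> subgroup M A" using nor normal_imp_subgroup by blast
  have sg: "subgroup (\<Union>CC) A"
  proof
    show "\<Union>CC \<subseteq> carrier A"
    proof
      fix x assume "x \<in> \<Union>CC"
      then obtain M where "M \<in> CC" "x \<in> M" by blast
      then show "x \<in> carrier A" using subgroup.mem_carrier[OF sgM] by blast
    qed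
    obtain M0 where M0: "M0 \<in> CC" using ne by blast
    have "\<one>\<^bsub>A\<^esub> \<in> M0" using subgroup.one_closed[OF sgM[OF M0]] .
    then show "\<one>\<^bsub>A\<^esub> \<in> \<Union>CC" using M0 by blast
    fix x assume "x \<in> \<Union>CC"
    then obtain M where M: "M \<in> CC" "x \<in> M" by blast
    have "inv\<^bsub>A\<^esub> x \<in> M" using subgroup.m_inv_closed[OF sgM[OF M(1)] M(2)] .
    then show "inv\<^bsub>A\<^esub> x \<in> \<Union>CC" using M by blast
  next
    fix x y assume "x \<in> \<Union>CC" "y \<in> \<Union>CC"
    then obtain M1 M2 where m: "M1 \<in> CC" "M2 \<in> CC" "x \<in> M1" "y \<in> M2" by blast
    show "x \<otimes>\<^bsub>A\<^esub> y \<in> \<Union>CC"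
    proof (cases "M1 \<subseteq> M2")
      case True
      then have "x \<otimes>\<^bsub>A\<^esub> y \<in> M2" using subgroup.m_closed[OF sgM[OF m(2)]] m by blast
      then show ?thesis using m by blast
    next
      case False
      then have "M2 \<subseteq> M1" using ch m by blast
      then have "x \<otimes>\<^bsub>A\<^esub> y \<in> M1" using subgroup.m_closed[OF sgM[OF m(1)]] m by blast
      then show ?thesis using m by blast
    qed
  qed
  show ?thesis unfolding A.normal_inv_iff
  proof (intro conjI ballI)
    show "subgroup (\<Union>CC) A" by (rule sg)
    fix g h assume g: "g \<in> carrier A" and h: "h \<in> \<Union>CC"
    then obtain M where M: "M \<in> CC" "h \<in> M" by blast
    have "g \<otimes>\<^bsub>A\<^esub> h \<otimes>\<^bsub>A\<^esub> inv\<^bsub>A\<^esub> g \<in> M"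
      using normal.inv_op_closed2[OF nor[OF M(1)] g M(2)] .
    then show "g \<otimes>\<^bsub>A\<^esub> h \<otimes>\<^bsub>A\<^esub> inv\<^bsub>A\<^esub> g \<in> \<Union>CC" using M(1) by blast
  qed
qed

lemma hyp_no_simple:
  assumes S: "group S" and sS: "simple_grp S" and nS: "nonabelian S"
    and hA: "hyperabelian A" and rho: "rho \<in> hom S A" and inj: "inj_on rho (carrier S)"
  shows False
proof -
  have A: "group A" using hA by (simp add: hyperabelian_def)
  interpret A: group A by (rule A)
  interpret S: group S by (rule S)
  interpret r: group_hom S A rho by (simp add: group_hom_def group_hom_axioms_def rho A S)
  define img where "img = rho ` carrier S"
  define F where "F = {M. M \<lhd> A \<and> M \<inter> img = {\<one>\<^bsub>A\<^esub>}}"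
  have oneimg: "\<one>\<^bsub>A\<^esub> \<in> img" unfolding img_def using r.hom_one S.one_closed by force
  have "{\<one>\<^bsub>A\<^esub>} \<in> F" using A.one_is_normal oneimg by (auto simp: F_def)
  then have "F \<noteq> {}" by blast
  moreover have "\<Union>CC \<in> F" if ne: "CC \<noteq> {}" and chn: "subset.chain F CC" for CC
  proof -
    have sub: "CC \<subseteq> F" and ch: "\<And>M1 M2. M1 \<in> CC \<Longrightarrow> M2 \<in> CC \<Longrightarrow> M1 \<subseteq> M2 \<or> M2 \<subseteq> M1"
      using chn by (auto simp: subset_chain_def)
    have nor: "\<And>M. M \<in> CC \<Longrightarrow> M \<lhd> A" and int: "\<And>M. M \<in> CC \<Longrightarrow> M \<inter> img = {\<one>\<^bsub>A\<^esub>}"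
      using sub unfolding F_def by blast+
    have "\<Union>CC \<lhd> A" using union_chain_normal[OF A ne nor ch] .
    moreover have "\<Union>CC \<inter> img = {\<one>\<^bsub>A\<^esub>}"
    proof
      show "\<Union>CC \<inter> img \<subseteq> {\<one>\<^bsub>A\<^esub>}" using int by blast
      obtain M0 where "M0 \<in> CC" using ne by blast
      then show "{\<one>\<^bsub>A\<^esub>} \<subseteq> \<Union>CC \<inter> img" using int by blast
    qed
    ultimately show ?thesis by (simp add: F_def)
  qed
  ultimately obtain N where NF: "N \<in> F" and Nmax: "\<And>Z. Z \<in> F \<Longrightarrow> N \<subseteq> Z \<Longrightarrow> Z = N"
    using subset_Zorn_nonempty[of F] by blast
  have NA: "N \<lhd> A" and Nimg: "N \<inter> img = {\<one>\<^bsub>A\<^esub>}" using NF by (auto simp: F_def)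
  interpret N: normal N A by (rule NA)
  from nS obtain x y where xy: "x \<in> carrier S" "y \<in> carrier S" "x \<otimes>\<^bsub>S\<^esub> y \<noteq> y \<otimes>\<^bsub>S\<^esub> x"
    by (auto simp: nonabelian_def)
  have x1: "x \<noteq> \<one>\<^bsub>S\<^esub>" using xy by auto
  have rx1: "rho x \<noteq> \<one>\<^bsub>A\<^esub>" using x1 xy(1) inj r.hom_one S.one_closed by (metis inj_on_def)
  have "N \<noteq> carrier A"
  proof
    assume "N = carrier A"
    then have "rho x \<in> N \<inter> img" using xy(1) by (auto simp: img_def)
    then show False using Nimg rx1 by blast
  qed
  then have "\<exists>M. M \<lhd> (A Mod N) \<and> M \<noteq> {\<one>\<^bsub>A Mod N\<^esub>} \<and>
             (\<forall>x \<in> M. \<forall>y \<in> M. x \<otimes>\<^bsub>A Mod N\<^esub> y = y \<otimes>\<^bsub>A Mod N\<^esub> x)"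
    using hA NA unfolding hyperabelian_def by blast
  then obtain M where M: "M \<lhd> A Mod N" "M \<noteq> {\<one>\<^bsub>A Mod N\<^esub>}"
    and Mab: "\<forall>a \<in> M. \<forall>b \<in> M. a \<otimes>\<^bsub>A Mod N\<^esub> b = b \<otimes>\<^bsub>A Mod N\<^esub> a"
    by blast
  interpret Q: group "A Mod N" by (rule N.factorgroup_is_group)
  define M' where "M' = {a \<in> carrier A. N #>\<^bsub>A\<^esub> a \<in> M}"
  have M'A: "M' \<lhd> A" unfolding M'_def
    using preimage_normal[OF A Q.is_group N.r_coset_hom_Mod M(1)] .
  have NinM: "N \<in> M"
  proof -
    have "\<one>\<^bsub>A Mod N\<^esub> \<in> M" by (rule subgroup.one_closed[OF normal_imp_subgroup[OF M(1)]])
    then show ?thesis by simp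
  qed
  have NM': "N \<subseteq> M'"
  proof
    fix n assume n: "n \<in> N"
    then have nc: "n \<in> carrier A" by (rule N.mem_carrier)
    have "N #>\<^bsub>A\<^esub> n = N" using A.coset_join2[OF nc N.subgroup_axioms n] .
    then show "n \<in> M'" using nc NinM by (simp add: M'_def)
  qed
  have "M' \<noteq> N"
  proof
    assume eq: "M' = N"
    have "M \<noteq> {N}" using M(2) by simp
    then have "\<exists>C. C \<in> M \<and> C \<noteq> N" using NinM by auto
    then obtain C where C: "C \<in> M" "C \<noteq> N" by blast
    have "C \<in> carrier (A Mod N)" using subgroup.mem_carrier[OF normal_imp_subgroup[OF M(1)] C(1)] .
    then have "C \<in> (\<lambda>x. N #>\<^bsub>A\<^esub> x) ` carrier A" by (simp only: carrier_FactGroup)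
    then obtain a where a: "a \<in> carrier A" "C = N #>\<^bsub>A\<^esub> a" by blast
    have "a \<in> M'" using C a unfolding M'_def by simp
    then have "a \<in> N" using eq by simp
    then have "C = N" using a A.coset_join2[OF a(1) N.subgroup_axioms] by simp
    then show False using C by simp
  qed
  then have "M' \<notin> F" using Nmax NM' by blast
  then have "M' \<inter> img \<noteq> {\<one>\<^bsub>A\<^esub>}" using M'A by (simp add: F_def)
  moreover have "\<one>\<^bsub>A\<^esub> \<in> M' \<inter> img" using oneimg subgroup.one_closed[OF normal_imp_subgroup[OF M'A]] by blast
  ultimately obtain z where z: "z \<in> M' \<inter> img" "z \<noteq> \<one>\<^bsub>A\<^esub>" by blast
  then obtain s where s: "s \<in> carrier S" "rho s \<in> M'" "rho s \<noteq> \<one>\<^bsub>A\<^esub>"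
    unfolding img_def by blast
  have s1: "s \<noteq> \<one>\<^bsub>S\<^esub>" using s by auto
  define T where "T = {t \<in> carrier S. rho t \<in> M'}"
  have TS: "T \<lhd> S" unfolding T_def using preimage_normal[OF S A rho M'A] .
  have "s \<in> T" using s by (simp add: T_def)
  then have "T \<noteq> {\<one>\<^bsub>S\<^esub>}" using s1 by blast
  then have T: "T = carrier S" using sS TS unfolding simple_grp_def by blast
  have rxM: "N #>\<^bsub>A\<^esub> rho x \<in> M" "N #>\<^bsub>A\<^esub> rho y \<in> M"
    using xy T unfolding T_def M'_def by blast+
  have rxc: "rho x \<in> carrier A" "rho y \<in> carrier A" using xy by auto
  have "(N #>\<^bsub>A\<^esub> rho x) <#>\<^bsub>A\<^esub> (N #>\<^bsub>A\<^esub> rho y) = (N #>\<^bsub>A\<^esub> rho y) <#>\<^bsub>A\<^esub> (N #>\<^bsub>A\<^esub> rho x)"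
    using Mab rxM by simp
  then have "N #>\<^bsub>A\<^esub> (rho x \<otimes>\<^bsub>A\<^esub> rho y) = N #>\<^bsub>A\<^esub> (rho y \<otimes>\<^bsub>A\<^esub> rho x)"
    by (simp only: N.rcos_sum[OF rxc] N.rcos_sum[OF rxc(2,1)])
  then have e1: "N #>\<^bsub>A\<^esub> (rho (x \<otimes>\<^bsub>S\<^esub> y)) = N #>\<^bsub>A\<^esub> (rho (y \<otimes>\<^bsub>S\<^esub> x))" using xy by simp
  have c1: "rho (x \<otimes>\<^bsub>S\<^esub> y) \<in> carrier A" "rho (y \<otimes>\<^bsub>S\<^esub> x) \<in> carrier A" using xy by auto
  have e2: "N #>\<^bsub>A\<^esub> (rho (x \<otimes>\<^bsub>S\<^esub> y) \<otimes>\<^bsub>A\<^esub> inv\<^bsub>A\<^esub> rho (y \<otimes>\<^bsub>S\<^esub> x)) = N"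
    using A.coset_mult_inv2[OF e1 c1 N.subset] .
  have c2: "rho (x \<otimes>\<^bsub>S\<^esub> y) \<otimes>\<^bsub>A\<^esub> inv\<^bsub>A\<^esub> rho (y \<otimes>\<^bsub>S\<^esub> x) \<in> carrier A" using c1 by simp
  have inN: "rho (x \<otimes>\<^bsub>S\<^esub> y) \<otimes>\<^bsub>A\<^esub> inv\<^bsub>A\<^esub> rho (y \<otimes>\<^bsub>S\<^esub> x) \<in> N"
    using A.coset_join1[OF e2 c2 N.subgroup_axioms] .
  define w where "w = x \<otimes>\<^bsub>S\<^esub> y \<otimes>\<^bsub>S\<^esub> inv\<^bsub>S\<^esub> (y \<otimes>\<^bsub>S\<^esub> x)"
  have wc: "w \<in> carrier S" using xy by (simp add: w_def)
  have "rho (x \<otimes>\<^bsub>S\<^esub> y) \<otimes>\<^bsub>A\<^esub> inv\<^bsub>A\<^esub> rho (y \<otimes>\<^bsub>S\<^esub> x) = rho w"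
    using xy by (simp add: w_def)
  with inN have "rho w \<in> N" by simp
  then have "rho w \<in> N \<inter> img" using wc unfolding img_def by blast
  then have "rho w = rho \<one>\<^bsub>S\<^esub>" using Nimg by simp
  then have w1: "w = \<one>\<^bsub>S\<^esub>" using inj_onD[OF inj _ wc S.one_closed] by blast
  have "x \<otimes>\<^bsub>S\<^esub> y = (x \<otimes>\<^bsub>S\<^esub> y \<otimes>\<^bsub>S\<^esub> inv\<^bsub>S\<^esub> (y \<otimes>\<^bsub>S\<^esub> x)) \<otimes>\<^bsub>S\<^esub> (y \<otimes>\<^bsub>S\<^esub> x)"
    using xy by (simp add: S.m_assoc)
  also have "\<dots> = y \<otimes>\<^bsub>S\<^esub> x" using w1 xy by (simp add: w_def)
  finally show False using xy by simp
qed



lemma restrict_in_Aut: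
  assumes XX: "group XX" and f: "f \<in> hom XX XX" and inj: "inj_on f (carrier XX)"
    and surj: "f ` carrier XX = carrier XX"
  shows "restrict f (carrier XX) \<in> carrier (AutoGroup XX)"
proof -
  have h: "restrict f (carrier XX) \<in> hom XX XX"
    using group.hom_restrict[OF XX f] by simp
  have "bij_betw f (carrier XX) (carrier XX)" using inj surj by (simp add: bij_betw_def)
  then have "bij_betw (restrict f (carrier XX)) (carrier XX) (carrier XX)"
    using bij_betw_cong[of "carrier XX" "restrict f (carrier XX)" f] by simp
  then show ?thesis using h by (simp add: group.Aut_carrier[OF XX] auto_def Bij_def)
qed

locale setting =
  fixes G :: "'a monoid" (structure) and H :: "'a set" and j :: "('a \<Rightarrow> 'a) \<Rightarrow> ('a \<Rightarrow> 'a)"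
  assumes grpG: "group G"
    and subH: "subgroup H G"
    and simpH: "simple_grp (G\<lparr>carrier := H\<rparr>)" and nabH: "nonabelian (G\<lparr>carrier := H\<rparr>)"
    and simpG: "simple_grp G" and nabG: "nonabelian G"
    and locH: "localization (G\<lparr>carrier := H\<rparr>) G (\<lambda>x. x)"
    and chG: "cohopfian G" and chAutG: "cohopfian (AutoGroup G)"
    and hypOut: "hyperabelian (Out G)"
    and jhom: "j \<in> hom (AutoGroup (G\<lparr>carrier := H\<rparr>)) (AutoGroup G)"
    and jinj: "inj_on j (carrier (AutoGroup (G\<lparr>carrier := H\<rparr>)))"
    and jconj: "\<forall>h \<in> H. j (group_conj (G\<lparr>carrier := H\<rparr>) h) = group_conj G h"
begin

abbreviation "HH \<equiv> G\<lparr>carrier := H\<rparr>"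
abbreviation "AutH \<equiv> AutoGroup HH"
abbreviation "B \<equiv> AutoGroup G"
abbreviation "NN \<equiv> {a \<in> carrier AutH. j a \<in> Inn G}"

lemma G: "group G" by (rule grpG)
lemma HH: "group HH" using group.subgroup_imp_group[OF grpG subH] .
lemma AH: "group AutH" using group.AutoGroup[OF HH] .
lemma BG: "group B" using group.AutoGroup[OF grpG] .

lemma jgh: "group_hom AutH B j" by (simp add: group_hom_def group_hom_axioms_def AH BG jhom)

lemma Hc: "H \<subseteq> carrier G" using subH by (rule subgroup.subset)

lemma h0: "\<exists>h0 \<in> H. h0 \<noteq> \<one>"
  using simpH subgroup.one_closed[OF subH] by (auto simp: simple_grp_def)

lemma conjH_closed: "h \<in> H \<Longrightarrow> group_conj HH h \<in> carrier AutH"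
  using group.conj_closed[OF HH] by simp

lemma jconjH: "h \<in> H \<Longrightarrow> j (group_conj HH h) = group_conj G h"
  using jconj by blast

lemma conjG_inj: "inj_on (group_conj G) (carrier G)"
  using group.conj_inj[OF G simpG nabG] .

lemma conjG_eq: "u \<in> carrier G \<Longrightarrow> v \<in> carrier G \<Longrightarrow> group_conj G u = group_conj G v \<Longrightarrow> u = v"
  using conjG_inj by (auto simp: inj_on_def)

lemma InnG_normal: "Inn G \<lhd> B" by (rule group.Inn_normal[OF G])
lemma InnH_normal: "Inn HH \<lhd> AutH" by (rule group.Inn_normal[OF HH])


lemma NN_normal: "NN \<lhd> AutH"
  using preimage_normal[OF AH BG jhom InnG_normal] .


lemma InnH_sub_NN: "Inn HH \<subseteq> NN"
proof
  fix x assume "x \<in> Inn HH"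
  then have "x \<in> group_conj HH ` H" unfolding Inn_def by simp
  then obtain h where h: "h \<in> H" "x = group_conj HH h" by blast
  have xc: "x \<in> carrier AutH" unfolding h(2) by (rule conjH_closed[OF h(1)])
  have "j x = group_conj G h" unfolding h(2) by (rule jconjH[OF h(1)])
  moreover have "h \<in> carrier G" using h Hc by blast
  ultimately have "j x \<in> Inn G" unfolding Inn_def by blast
  then show "x \<in> NN" using xc by blast
qed

lemma j_InnH: "j ` Inn HH \<subseteq> Inn G"
  using InnH_sub_NN by blast

lemma one_InnH: "\<one>\<^bsub>AutH\<^esub> \<in> Inn HH"
  using subgroup.one_closed[OF normal_imp_subgroup[OF InnH_normal]] .

lemma InnH_carrier: "Inn HH \<subseteq> carrier AutH" by (rule subgroup.subset[OF normal_imp_subgroup[OF InnH_normal]])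

lemma k_coset:
  assumes a: "a \<in> carrier AutH"
  shows "Inn G <#>\<^bsub>B\<^esub> (j ` (Inn HH #>\<^bsub>AutH\<^esub> a)) = Inn G #>\<^bsub>B\<^esub> j a"
proof -
  have e1: "j ` (Inn HH #>\<^bsub>AutH\<^esub> a) = (\<lambda>x. j (x \<otimes>\<^bsub>AutH\<^esub> a)) ` Inn HH"
    unfolding r_coset_def by blast
  have e2: "(\<lambda>x. j (x \<otimes>\<^bsub>AutH\<^esub> a)) ` Inn HH = (\<lambda>x. j x \<otimes>\<^bsub>B\<^esub> j a) ` Inn HH"
  proof (rule image_cong[OF refl])
    fix x assume "x \<in> Inn HH"
    then have "x \<in> carrier AutH" using InnH_carrier by blast
    then show "j (x \<otimes>\<^bsub>AutH\<^esub> a) = j x \<otimes>\<^bsub>B\<^esub> j a" using a by (rule group_hom.hom_mult[OF jgh])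
  qed
  have e3: "(\<lambda>x. j x \<otimes>\<^bsub>B\<^esub> j a) ` Inn HH = (j ` Inn HH) #>\<^bsub>B\<^esub> j a"
    unfolding r_coset_def by blast
  have one: "\<one>\<^bsub>B\<^esub> \<in> j ` Inn HH" using one_InnH group_hom.hom_one[OF jgh] by (metis imageI)
  have ja: "j a \<in> carrier B" using a by (rule group_hom.hom_closed[OF jgh])
  show ?thesis unfolding e1 e2 e3
    by (rule coset_absorb[OF BG normal_imp_subgroup[OF InnG_normal] j_InnH one ja])
qed

lemma pi_coset:
  assumes a: "a \<in> carrier AutH"
  shows "NN <#>\<^bsub>AutH\<^esub> (Inn HH #>\<^bsub>AutH\<^esub> a) = NN #>\<^bsub>AutH\<^esub> a"
  using coset_absorb[OF AH normal_imp_subgroup[OF NN_normal] InnH_sub_NN one_InnH a] .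

lemma OutH_carrier: "carrier (Out HH) = (\<lambda>a. Inn HH #>\<^bsub>AutH\<^esub> a) ` carrier AutH"
  unfolding Out_def carrier_FactGroup ..

lemma OutG_carrier: "carrier (Out G) = (\<lambda>b. Inn G #>\<^bsub>B\<^esub> b) ` carrier B"
  unfolding Out_def carrier_FactGroup ..

lemma OutG_group: "group (Out G)"
  unfolding Out_def by (rule normal.factorgroup_is_group[OF InnG_normal])

lemma proj_hom: "(\<lambda>b. Inn G #>\<^bsub>B\<^esub> b) \<in> hom B (Out G)"
  unfolding Out_def by (rule normal.r_coset_hom_Mod[OF InnG_normal])

lemma killH:
  assumes XX: "group XX" and psi: "psi \<in> hom B XX"
    and kill: "\<And>h. h \<in> H \<Longrightarrow> psi (group_conj G h) = \<one>\<^bsub>XX\<^esub>"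
  shows "\<And>c. c \<in> Inn G \<Longrightarrow> psi c = \<one>\<^bsub>XX\<^esub>"
proof -
  obtain h0 where "h0 \<in> H" "h0 \<noteq> \<one>" using h0 by blast
  fix c assume "c \<in> Inn G"
  then obtain u where u: "u \<in> carrier G" "c = group_conj G u" by (auto simp: Inn_def)
  show "psi c = \<one>\<^bsub>XX\<^esub>"
    using group.kill_lemma[OF G simpG XX psi Hc \<open>h0 \<in> H\<close> \<open>h0 \<noteq> \<one>\<close> kill u(1)] u(2) by simp
qed

lemma uf_elim:
  assumes "unique_factorization XX YY ZZ i phi"
  obtains psi where "psi \<in> hom YY ZZ" "\<And>x. x \<in> carrier XX \<Longrightarrow> psi (i x) = phi x"
    "\<And>psi'. psi' \<in> hom YY ZZ \<Longrightarrow> (\<And>x. x \<in> carrier XX \<Longrightarrow> psi' (i x) = phi x) \<Longrightarrow>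
        (\<And>y. y \<in> carrier YY \<Longrightarrow> psi' y = psi y)"
  using assms unfolding unique_factorization_def by metis

lemma uf_intro:
  assumes "psi \<in> hom YY ZZ" "\<And>x. x \<in> carrier XX \<Longrightarrow> psi (i x) = phi x"
    "\<And>psi' y. psi' \<in> hom YY ZZ \<Longrightarrow> (\<forall>x \<in> carrier XX. psi' (i x) = phi x) \<Longrightarrow>
        y \<in> carrier YY \<Longrightarrow> psi' y = psi y"
  shows "unique_factorization XX YY ZZ i phi"
  using assms unfolding unique_factorization_def by blast

lemma fwd_b:
  assumes LOC: "localization AutH B j"
  shows "\<forall>\<theta> \<in> carrier (AutoGroup B). (\<forall>a \<in> carrier AutH. \<theta> (j a) = j a) \<longrightarrow> \<theta> = \<one>\<^bsub>AutoGroup B\<^esub>"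
proof (intro ballI impI)
  fix \<theta> assume th: "\<theta> \<in> carrier (AutoGroup B)" and fx: "\<forall>a \<in> carrier AutH. \<theta> (j a) = j a"
  have "unique_factorization AutH B B j j" using LOC jhom unfolding localization_def by blast
  then obtain psi where psi: "psi \<in> hom B B"
    and un0: "\<forall>psi'\<in>hom B B. (\<forall>x \<in> carrier AutH. psi' (j x) = j x) \<longrightarrow> (\<forall>y \<in> carrier B. psi' y = psi y)"
    unfolding unique_factorization_def by blast
  have un: "\<And>psi' y. psi' \<in> hom B B \<Longrightarrow> (\<And>x. x \<in> carrier AutH \<Longrightarrow> psi' (j x) = j x) \<Longrightarrow>
        y \<in> carrier B \<Longrightarrow> psi' y = psi y" using un0 by blast
  have thh: "\<theta> \<in> hom B B" using group.Aut_elem(1)[OF BG th] .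
  have ih: "(\<lambda>x\<in>carrier B. x) \<in> hom B B" by (rule homI) (auto intro: monoid.m_closed[OF group.is_monoid[OF BG]])
  have idj: "(\<lambda>x\<in>carrier B. x) (j x) = j x" if "x \<in> carrier AutH" for x
    using group_hom.hom_closed[OF jgh that] by simp
  show "\<theta> = \<one>\<^bsub>AutoGroup B\<^esub>"
  proof (rule group.Aut_eq[OF BG th])
    show "\<one>\<^bsub>AutoGroup B\<^esub> \<in> carrier (AutoGroup B)" by (rule monoid.one_closed[OF group.is_monoid[OF group.AutoGroup[OF BG]]])
    fix y assume y: "y \<in> carrier B"
    have "\<theta> y = psi y" using un[OF thh _ y] fx by blast
    moreover have "(\<lambda>x\<in>carrier B. x) y = psi y" using un[OF ih idj y] by blast
    ultimately show "\<theta> y = \<one>\<^bsub>AutoGroup B\<^esub> y" by (simp add: group.Aut_one[OF BG])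
  qed
qed

lemma fwd_d:
  assumes LOC: "localization AutH B j"
  shows "\<forall>\<phi> \<in> hom AutH B. Inn HH \<subseteq> kernel AutH B \<phi> \<longrightarrow> NN \<subseteq> kernel AutH B \<phi>"
proof (intro ballI impI subsetI)
  fix \<phi> a assume ph: "\<phi> \<in> hom AutH B" and ker: "Inn HH \<subseteq> kernel AutH B \<phi>" and a: "a \<in> NN"
  have "unique_factorization AutH B B j \<phi>" using LOC ph unfolding localization_def by blast
  then obtain psi where psi: "psi \<in> hom B B" and pj0: "\<forall>x \<in> carrier AutH. psi (j x) = \<phi> x"
    unfolding unique_factorization_def by blast
  have pj: "\<And>x. x \<in> carrier AutH \<Longrightarrow> psi (j x) = \<phi> x" using pj0 by blast
  have kill: "psi (group_conj G h) = \<one>\<^bsub>B\<^esub>" if h: "h \<in> H" for h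
  proof -
    have c: "group_conj HH h \<in> Inn HH" using h unfolding Inn_def by simp
    have "psi (group_conj G h) = \<phi> (group_conj HH h)"
      using pj[OF conjH_closed[OF h]] jconjH[OF h] by simp
    also have "\<dots> = \<one>\<^bsub>B\<^esub>" using ker c unfolding kernel_def by blast
    finally show ?thesis .
  qed
  have ac: "a \<in> carrier AutH" and ja: "j a \<in> Inn G" using a by auto
  have "\<phi> a = \<one>\<^bsub>B\<^esub>" using pj[OF ac] killH[OF BG psi kill ja] by simp
  then show "a \<in> kernel AutH B \<phi>" using ac unfolding kernel_def by blast
qed

lemma fwd_c:
  assumes LOC: "localization AutH B j"
  shows "\<forall>\<phi>' \<in> hom (AutH Mod NN) B.
           unique_factorization (Out HH) (Out G) B (\<lambda>C. Inn G <#>\<^bsub>B\<^esub> (j ` C)) (\<lambda>C. \<phi>' (NN <#>\<^bsub>AutH\<^esub> C))"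
proof
  fix \<phi>' assume ph': "\<phi>' \<in> hom (AutH Mod NN) B"
  have Qg: "group (AutH Mod NN)" by (rule normal.factorgroup_is_group[OF NN_normal])
  have ph'gh: "group_hom (AutH Mod NN) B \<phi>'" by (simp add: group_hom_def group_hom_axioms_def Qg BG ph')
  define \<phi> where "\<phi> = (\<lambda>a. \<phi>' (NN #>\<^bsub>AutH\<^esub> a))"
  have ph: "\<phi> \<in> hom AutH B" unfolding \<phi>_def
    using normal.r_coset_hom_Mod[OF NN_normal] ph' by (rule Group.hom_compose[unfolded comp_def])
  have "unique_factorization AutH B B j \<phi>" using LOC ph unfolding localization_def by blast
  then obtain psi where psi: "psi \<in> hom B B" and pj0: "\<forall>x \<in> carrier AutH. psi (j x) = \<phi> x"
    and un0: "\<forall>psi'\<in>hom B B. (\<forall>x \<in> carrier AutH. psi' (j x) = \<phi> x) \<longrightarrow> (\<forall>y \<in> carrier B. psi' y = psi y)"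
    unfolding unique_factorization_def by blast
  have pj: "\<And>x. x \<in> carrier AutH \<Longrightarrow> psi (j x) = \<phi> x" using pj0 by blast
  have un: "\<And>psi' y. psi' \<in> hom B B \<Longrightarrow> (\<And>x. x \<in> carrier AutH \<Longrightarrow> psi' (j x) = \<phi> x) \<Longrightarrow>
        y \<in> carrier B \<Longrightarrow> psi' y = psi y" using un0 by blast
  have phNN: "\<phi> x = \<one>\<^bsub>B\<^esub>" if x: "x \<in> NN" for x
  proof -
    have xc: "x \<in> carrier AutH" using x by blast
    have "NN #>\<^bsub>AutH\<^esub> x = NN"
      using group.coset_join2[OF AH xc normal_imp_subgroup[OF NN_normal] x] .
    then have "\<phi> x = \<phi>' \<one>\<^bsub>AutH Mod NN\<^esub>" unfolding \<phi>_def by simp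
    then show ?thesis using group_hom.hom_one[OF ph'gh] by simp
  qed
  have kill: "psi (group_conj G h) = \<one>\<^bsub>B\<^esub>" if h: "h \<in> H" for h
  proof -
    have c: "group_conj HH h \<in> NN" using h InnH_sub_NN unfolding Inn_def by auto
    have "psi (group_conj G h) = \<phi> (group_conj HH h)"
      using pj[OF conjH_closed[OF h]] jconjH[OF h] by simp
    then show ?thesis using phNN[OF c] by simp
  qed
  have killI: "\<And>c. c \<in> Inn G \<Longrightarrow> psi c = \<one>\<^bsub>B\<^esub>" using killH[OF BG psi kill] .
  define rho where "rho = (\<lambda>C. the_elem (psi ` C))"
  have rhoh: "rho \<in> hom (Out G) B" unfolding rho_def Out_def
    using quotient_factor(1)[OF BG BG InnG_normal psi killI] .
  have rhoev: "rho (Inn G #>\<^bsub>B\<^esub> b) = psi b" if "b \<in> carrier B" for b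
    unfolding rho_def using quotient_factor(2)[OF BG BG InnG_normal psi killI that] .
  show "unique_factorization (Out HH) (Out G) B (\<lambda>C. Inn G <#>\<^bsub>B\<^esub> (j ` C)) (\<lambda>C. \<phi>' (NN <#>\<^bsub>AutH\<^esub> C))"
  proof (rule uf_intro[OF rhoh])
    fix C assume "C \<in> carrier (Out HH)"
    then obtain a where a: "a \<in> carrier AutH" "C = Inn HH #>\<^bsub>AutH\<^esub> a" unfolding OutH_carrier by blast
    have ja: "j a \<in> carrier B" using group_hom.hom_closed[OF jgh a(1)] .
    show "rho (Inn G <#>\<^bsub>B\<^esub> (j ` C)) = \<phi>' (NN <#>\<^bsub>AutH\<^esub> C)"
      unfolding a(2) k_coset[OF a(1)] pi_coset[OF a(1)] rhoev[OF ja] pj[OF a(1)] \<phi>_def ..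
  next
    fix sig y assume h'': "sig \<in> hom (Out G) B"
      and eq: "\<forall>C \<in> carrier (Out HH). sig (Inn G <#>\<^bsub>B\<^esub> (j ` C)) = \<phi>' (NN <#>\<^bsub>AutH\<^esub> C)"
      and y: "y \<in> carrier (Out G)"
    define chi where "chi = (\<lambda>b. sig (Inn G #>\<^bsub>B\<^esub> b))"
    have chih: "chi \<in> hom B B" unfolding chi_def
      using proj_hom h'' by (rule Group.hom_compose[unfolded comp_def])
    have chij: "chi (j x) = \<phi> x" if x: "x \<in> carrier AutH" for x
    proof -
      have "Inn HH #>\<^bsub>AutH\<^esub> x \<in> carrier (Out HH)" unfolding OutH_carrier using x by blast
      then have "sig (Inn G <#>\<^bsub>B\<^esub> (j ` (Inn HH #>\<^bsub>AutH\<^esub> x))) = \<phi>' (NN <#>\<^bsub>AutH\<^esub> (Inn HH #>\<^bsub>AutH\<^esub> x))"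
        using eq by blast
      then show ?thesis unfolding k_coset[OF x] pi_coset[OF x] chi_def \<phi>_def .
    qed
    obtain b where b: "b \<in> carrier B" "y = Inn G #>\<^bsub>B\<^esub> b" using y unfolding OutG_carrier by blast
    have "chi b = psi b" using un[OF chih chij b(1)] .
    then show "sig y = rho y" unfolding b(2) rhoev[OF b(1)] chi_def .
  qed
qed

lemma phi_Inn:
  assumes ph: "\<phi> \<in> hom AutH B" and h: "h \<in> H"
  shows "\<phi> (group_conj HH h) \<in> Inn G"
proof -
  define rho where "rho = (\<lambda>h. Inn G #>\<^bsub>B\<^esub> \<phi> (group_conj HH h))"
  have c1: "(\<lambda>h. \<phi> (group_conj HH h)) \<in> hom HH B"
    using group.conj_hom[OF HH] ph by (rule Group.hom_compose[unfolded comp_def])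
  have rh: "rho \<in> hom HH (Out G)" unfolding rho_def
    using c1 proj_hom by (rule Group.hom_compose[unfolded comp_def])
  have gh: "group_hom HH (Out G) rho" by (simp add: group_hom_def group_hom_axioms_def HH OutG_group rh)
  have kn: "kernel HH (Out G) rho \<lhd> HH" by (rule group_hom.normal_kernel[OF gh])
  have "kernel HH (Out G) rho \<noteq> {\<one>\<^bsub>HH\<^esub>}"
  proof
    assume "kernel HH (Out G) rho = {\<one>\<^bsub>HH\<^esub>}"
    then have "inj_on rho (carrier HH)" using group_hom.inj_iff_trivial_ker[OF gh] by simp
    then show False using hyp_no_simple[OF HH simpH nabH hypOut rh] by blast
  qed
  then have "kernel HH (Out G) rho = carrier HH" using kn simpH unfolding simple_grp_def by blast
  then have "rho h = \<one>\<^bsub>Out G\<^esub>" using h unfolding kernel_def by auto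
  then have e: "Inn G #>\<^bsub>B\<^esub> \<phi> (group_conj HH h) = Inn G" unfolding rho_def by (simp add: Out_def)
  have "\<phi> (group_conj HH h) \<in> carrier B" using ph conjH_closed[OF h] by (rule hom_in_carrier)
  then show ?thesis using group.coset_join1[OF BG e _ normal_imp_subgroup[OF InnG_normal]] by blast
qed

lemma case2_unique:
  assumes condb: "\<forall>\<theta> \<in> carrier (AutoGroup B). (\<forall>a \<in> carrier AutH. \<theta> (j a) = j a) \<longrightarrow> \<theta> = \<one>\<^bsub>AutoGroup B\<^esub>"
    and gg: "gg \<in> carrier B" and sig: "sig \<in> hom B B"
    and sj: "\<And>a. a \<in> carrier AutH \<Longrightarrow> sig (j a) = group_conj B gg (j a)"
    and y: "y \<in> carrier B"
  shows "sig y = group_conj B gg y"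
proof -
  interpret Bg: group B by (rule BG)
  interpret G: group G by (rule G)
  have igg: "inv\<^bsub>B\<^esub> gg \<in> carrier B" using gg by simp
  have cinv: "group_conj B (inv\<^bsub>B\<^esub> gg) (group_conj B gg z) = z" if z: "z \<in> carrier B" for z
    using z gg by (simp add: Bg.conj_app Bg.m_assoc)
  have cinv2: "group_conj B gg (group_conj B (inv\<^bsub>B\<^esub> gg) z) = z" if z: "z \<in> carrier B" for z
    using z gg by (simp add: Bg.conj_app Bg.m_assoc)
  define \<theta> where "\<theta> = (\<lambda>b. group_conj B (inv\<^bsub>B\<^esub> gg) (sig b))"
  have ch: "group_conj B (inv\<^bsub>B\<^esub> gg) \<in> hom B B"
    using Bg.Aut_elem(1)[OF Bg.conj_closed[OF igg]] .
  have thh: "\<theta> \<in> hom B B" unfolding \<theta>_def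
    using sig ch by (rule Group.hom_compose[unfolded comp_def])
  interpret th: group_hom B B \<theta> by (simp add: group_hom_def group_hom_axioms_def BG thh)
  have thj: "\<theta> (j a) = j a" if a: "a \<in> carrier AutH" for a
  proof -
    have "j a \<in> carrier B" using group_hom.hom_closed[OF jgh a] .
    then show ?thesis unfolding \<theta>_def sj[OF a] using cinv by blast
  qed
  have thc: "\<theta> (group_conj G h) = group_conj G h" if h: "h \<in> H" for h
    using thj[OF conjH_closed[OF h]] jconjH[OF h] by simp
  obtain h0 where h0: "h0 \<in> H" "h0 \<noteq> \<one>" using h0 by blast
  have h0c: "h0 \<in> carrier G" using h0 Hc by blast
  have tc: "(\<theta> \<circ> group_conj G) \<in> hom G B" using G.conj_hom thh by (rule Group.hom_compose)
  have tcg: "group_hom G B (\<theta> \<circ> group_conj G)" by (simp add: group_hom_def group_hom_axioms_def BG G tc)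
  have "kernel G B (\<theta> \<circ> group_conj G) \<noteq> carrier G"
  proof
    assume "kernel G B (\<theta> \<circ> group_conj G) = carrier G"
    then have "\<theta> (group_conj G h0) = \<one>\<^bsub>B\<^esub>" using h0c unfolding kernel_def by auto
    then have "group_conj G h0 = group_conj G \<one>" using thc[OF h0(1)] G.conj_one by simp
    then show False using conjG_eq[OF h0c G.one_closed] h0(2) by blast
  qed
  then have KK: "kernel G B (\<theta> \<circ> group_conj G) = {\<one>}"
    using group_hom.normal_kernel[OF tcg] simpG unfolding simple_grp_def by blast
  have "kernel B B \<theta> = {\<one>\<^bsub>B\<^esub>}"
  proof
    show "{\<one>\<^bsub>B\<^esub>} \<subseteq> kernel B B \<theta>" unfolding kernel_def by simp
    show "kernel B B \<theta> \<subseteq> {\<one>\<^bsub>B\<^esub>}"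
    proof
      fix k assume "k \<in> kernel B B \<theta>"
      then have k: "k \<in> carrier B" "\<theta> k = \<one>\<^bsub>B\<^esub>" unfolding kernel_def by auto
      have "k u = u" if u: "u \<in> carrier G" for u
      proof -
        have ku: "k u \<in> carrier G" using G.Aut_app_closed[OF k(1) u] .
        have cu: "group_conj G u \<in> carrier B" using G.conj_closed[OF u] .
        have ciu: "group_conj G (inv u) \<in> carrier B" using G.conj_closed u by simp
        have "\<theta> (group_conj G (k u)) = \<theta> (k \<otimes>\<^bsub>B\<^esub> group_conj G u \<otimes>\<^bsub>B\<^esub> inv\<^bsub>B\<^esub> k)"
          using G.conj_action[OF k(1) u] by simp
        also have "\<dots> = \<theta> (group_conj G u)" using k cu by simp
        finally have e1: "\<theta> (group_conj G (k u)) = \<theta> (group_conj G u)" .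
        have "\<theta> (group_conj G (k u \<otimes> inv u)) = \<theta> (group_conj G (k u)) \<otimes>\<^bsub>B\<^esub> \<theta> (group_conj G (inv u))"
          using G.conj_hom ku u by (simp add: hom_mult G.conj_closed)
        also have "\<dots> = \<theta> (group_conj G u) \<otimes>\<^bsub>B\<^esub> \<theta> (group_conj G (inv u))" using e1 by simp
        also have "\<dots> = \<theta> (group_conj G u \<otimes>\<^bsub>B\<^esub> group_conj G (inv u))"
          using cu ciu by (simp add: th.hom_mult)
        also have "group_conj G u \<otimes>\<^bsub>B\<^esub> group_conj G (inv u) = group_conj G (u \<otimes> inv u)"
          using hom_mult[OF G.conj_hom u G.inv_closed[OF u]] by simp
        also have "\<dots> = \<one>\<^bsub>B\<^esub>" using u G.conj_one by simp
        also have "\<theta> \<one>\<^bsub>B\<^esub> = \<one>\<^bsub>B\<^esub>" by simp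
        finally have "k u \<otimes> inv u \<in> kernel G B (\<theta> \<circ> group_conj G)"
          using ku u unfolding kernel_def by simp
        then have "k u \<otimes> inv u = \<one>" using KK by blast
        then show ?thesis using ku u by (metis G.inv_equality G.inv_inv G.inv_closed G.r_inv)
      qed
      then have "k = \<one>\<^bsub>B\<^esub>" using k(1) by (intro G.Aut_eq) (simp_all add: G.Aut_one G.Aut_carrier G.id_in_auto)
      then show "k \<in> {\<one>\<^bsub>B\<^esub>}" by simp
    qed
  qed
  then have inj: "inj_on \<theta> (carrier B)" using th.inj_iff_trivial_ker by simp
  have surj: "\<theta> ` carrier B = carrier B" using chAutG thh inj unfolding cohopfian_def by blast
  have rA: "restrict \<theta> (carrier B) \<in> carrier (AutoGroup B)" by (rule restrict_in_Aut[OF BG thh inj surj])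
  have "restrict \<theta> (carrier B) = \<one>\<^bsub>AutoGroup B\<^esub>"
    using condb rA thj group_hom.hom_closed[OF jgh] by simp
  then have "\<theta> y = y" using y by (simp add: Bg.Aut_one) (metis restrict_apply')
  then have "group_conj B gg (\<theta> y) = group_conj B gg y" by simp
  then show ?thesis unfolding \<theta>_def using cinv2 sig y by (simp add: hom_in_carrier)
qed

lemma case2_data:
  assumes ph: "\<phi> \<in> hom AutH B" and h1: "h1 \<in> H" and ne: "\<phi> (group_conj HH h1) \<noteq> \<one>\<^bsub>B\<^esub>"
  shows "\<exists>gg \<in> carrier B. \<forall>a \<in> carrier AutH. group_conj B gg (j a) = \<phi> a"
proof -
  interpret Bg: group B by (rule BG)
  interpret G: group G by (rule G)
  interpret HHg: group HH by (rule HH)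
  interpret ph: group_hom AutH B \<phi> by (simp add: group_hom_def group_hom_axioms_def AH BG ph)
  interpret jh: group_hom AutH B j by (rule jgh)
  define f where "f = (\<lambda>h. inv_into (carrier G) (group_conj G) (\<phi> (group_conj HH h)))"
  have fc: "f h \<in> carrier G" and fconj: "group_conj G (f h) = \<phi> (group_conj HH h)" if h: "h \<in> H" for h
  proof -
    have "\<phi> (group_conj HH h) \<in> group_conj G ` carrier G" using phi_Inn[OF ph h] unfolding Inn_def .
    then show "f h \<in> carrier G" "group_conj G (f h) = \<phi> (group_conj HH h)"
      unfolding f_def by (auto intro: inv_into_into f_inv_into_f)
  qed
  have cHhom: "group_conj HH \<in> hom HH AutH" by (rule HHg.conj_hom)
  have fhom: "f \<in> hom HH G"
  proof (rule homI)
    fix x assume "x \<in> carrier HH" then show "f x \<in> carrier G" using fc by simp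
  next
    fix x y assume xy: "x \<in> carrier HH" "y \<in> carrier HH"
    then have xyH: "x \<in> H" "y \<in> H" "x \<otimes> y \<in> H" using subgroup.m_closed[OF subH] by auto
    have "group_conj G (f (x \<otimes> y)) = \<phi> (group_conj HH (x \<otimes>\<^bsub>HH\<^esub> y))" using fconj[OF xyH(3)] by simp
    also have "\<dots> = \<phi> (group_conj HH x \<otimes>\<^bsub>AutH\<^esub> group_conj HH y)"
      using hom_mult[OF cHhom xy] by simp
    also have "\<dots> = \<phi> (group_conj HH x) \<otimes>\<^bsub>B\<^esub> \<phi> (group_conj HH y)"
      using conjH_closed xyH by simp
    also have "\<dots> = group_conj G (f x) \<otimes>\<^bsub>B\<^esub> group_conj G (f y)" using fconj xyH by simp
    also have "\<dots> = group_conj G (f x \<otimes> f y)"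
      using hom_mult[OF G.conj_hom fc[OF xyH(1)] fc[OF xyH(2)]] by simp
    finally have "group_conj G (f (x \<otimes> y)) = group_conj G (f x \<otimes> f y)" .
    then show "f (x \<otimes>\<^bsub>HH\<^esub> y) = f x \<otimes>\<^bsub>G\<^esub> f y"
      using conjG_eq fc xyH by simp
  qed
  have "unique_factorization HH G G (\<lambda>x. x) f" using locH fhom unfolding localization_def by blast
  then obtain g where g: "g \<in> hom G G" and gf0: "\<forall>x \<in> carrier HH. g x = f x"
    unfolding unique_factorization_def by blast
  have gf: "g h = f h" if "h \<in> H" for h using gf0 that by simp
  interpret gh: group_hom G G g by (simp add: group_hom_def group_hom_axioms_def G g)
  have h1c: "h1 \<in> carrier G" using h1 Hc by blast
  have "kernel G G g \<noteq> carrier G"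
  proof
    assume "kernel G G g = carrier G"
    then have "g h1 = \<one>" using h1c unfolding kernel_def by auto
    then have "group_conj G (f h1) = \<one>\<^bsub>B\<^esub>" using gf[OF h1] G.conj_one by simp
    then show False using fconj[OF h1] ne by simp
  qed
  then have "kernel G G g = {\<one>}" using gh.normal_kernel simpG unfolding simple_grp_def by blast
  then have ginj: "inj_on g (carrier G)" using gh.inj_iff_trivial_ker by simp
  have gsurj: "g ` carrier G = carrier G" using chG g ginj unfolding cohopfian_def by blast
  define gg where "gg = restrict g (carrier G)"
  have gg: "gg \<in> carrier B" unfolding gg_def by (rule restrict_in_Aut[OF G g ginj gsurj])
  have ggapp: "gg u = g u" if "u \<in> carrier G" for u using that by (simp add: gg_def)
  define psi0 where "psi0 = group_conj B gg"
  have psi0h: "psi0 \<in> hom B B" unfolding psi0_def using Bg.Aut_elem(1)[OF Bg.conj_closed[OF gg]] .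
  interpret p0: group_hom B B psi0 by (simp add: group_hom_def group_hom_axioms_def BG psi0h)
  have psi0c: "psi0 (group_conj G u) = group_conj G (g u)" if u: "u \<in> carrier G" for u
  proof -
    have "psi0 (group_conj G u) = gg \<otimes>\<^bsub>B\<^esub> group_conj G u \<otimes>\<^bsub>B\<^esub> inv\<^bsub>B\<^esub> gg"
      unfolding psi0_def using Bg.conj_app G.conj_closed[OF u] by simp
    also have "\<dots> = group_conj G (gg u)" by (rule G.conj_action[OF gg u])
    finally show ?thesis using ggapp[OF u] by simp
  qed
  have main: "psi0 (j a) = \<phi> a" if a: "a \<in> carrier AutH" for a
  proof -
    define x where "x = psi0 (j a)"
    define y where "y = \<phi> a"
    have xc: "x \<in> carrier B" unfolding x_def using a by simp
    have yc: "y \<in> carrier B" unfolding y_def using a by simp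
    have xy: "x (g h) = y (g h)" if h: "h \<in> H" for h
    proof -
      have hc: "h \<in> carrier G" using h Hc by blast
      have ah: "a h \<in> H" using HHg.Aut_app_closed[OF a] h by simp
      have ahc: "a h \<in> carrier G" using ah Hc by blast
      have E1: "a \<otimes>\<^bsub>AutH\<^esub> group_conj HH h \<otimes>\<^bsub>AutH\<^esub> inv\<^bsub>AutH\<^esub> a = group_conj HH (a h)"
        using HHg.conj_action[OF a] h by simp
      have ch: "group_conj HH h \<in> carrier AutH" using conjH_closed[OF h] .
      have "group_conj G (x (g h)) = x \<otimes>\<^bsub>B\<^esub> group_conj G (g h) \<otimes>\<^bsub>B\<^esub> inv\<^bsub>B\<^esub> x"
        using G.conj_action[OF xc] g hc by (simp add: hom_in_carrier)
      also have "\<dots> = psi0 (j a) \<otimes>\<^bsub>B\<^esub> psi0 (j (group_conj HH h)) \<otimes>\<^bsub>B\<^esub> inv\<^bsub>B\<^esub> psi0 (j a)"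
        unfolding x_def jconjH[OF h] psi0c[OF hc] ..
      also have "\<dots> = psi0 (j (a \<otimes>\<^bsub>AutH\<^esub> group_conj HH h \<otimes>\<^bsub>AutH\<^esub> inv\<^bsub>AutH\<^esub> a))"
        using a ch by simp
      also have "\<dots> = group_conj G (g (a h))"
        unfolding E1 jconjH[OF ah] psi0c[OF ahc] ..
      finally have ex: "group_conj G (x (g h)) = group_conj G (g (a h))" .
      have "group_conj G (y (g h)) = y \<otimes>\<^bsub>B\<^esub> group_conj G (g h) \<otimes>\<^bsub>B\<^esub> inv\<^bsub>B\<^esub> y"
        using G.conj_action[OF yc] g hc by (simp add: hom_in_carrier)
      also have "\<dots> = \<phi> a \<otimes>\<^bsub>B\<^esub> \<phi> (group_conj HH h) \<otimes>\<^bsub>B\<^esub> inv\<^bsub>B\<^esub> \<phi> a"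
        unfolding y_def gf[OF h] fconj[OF h] ..
      also have "\<dots> = \<phi> (a \<otimes>\<^bsub>AutH\<^esub> group_conj HH h \<otimes>\<^bsub>AutH\<^esub> inv\<^bsub>AutH\<^esub> a)"
        using a ch by simp
      also have "\<dots> = group_conj G (g (a h))"
        unfolding E1 gf[OF ah] fconj[OF ah] ..
      finally have ey: "group_conj G (y (g h)) = group_conj G (g (a h))" .
      have "g h \<in> carrier G" using g hc by (simp add: hom_in_carrier)
      then have "x (g h) \<in> carrier G" "y (g h) \<in> carrier G"
        using G.Aut_app_closed xc yc by auto
      then show ?thesis using conjG_eq ex ey by metis
    qed
    define w where "w = inv\<^bsub>B\<^esub> gg \<otimes>\<^bsub>B\<^esub> inv\<^bsub>B\<^esub> y \<otimes>\<^bsub>B\<^esub> x \<otimes>\<^bsub>B\<^esub> gg"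
    have wc: "w \<in> carrier B" unfolding w_def using gg xc yc by simp
    have wfix: "w h = h" if h: "h \<in> H" for h
    proof -
      have hc: "h \<in> carrier G" using h Hc by blast
      have ghc: "g h \<in> carrier G" using g hc by (simp add: hom_in_carrier)
      have "w h = (inv\<^bsub>B\<^esub> gg) ((inv\<^bsub>B\<^esub> y) (x (gg h)))"
        unfolding w_def using gg xc yc hc ghc
        by (simp add: G.Aut_mult_app G.Aut_app_closed)
      also have "\<dots> = (inv\<^bsub>B\<^esub> gg) (gg h)"
        using xy[OF h] ggapp[OF hc] G.Aut_inv_app(2)[OF yc ghc] by simp
      also have "\<dots> = h" using G.Aut_inv_app(2)[OF gg hc] .
      finally show ?thesis .
    qed
    have w1: "w = \<one>\<^bsub>B\<^esub>" using loc_fix[OF G subH locH wc wfix] .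
    have "x = y \<otimes>\<^bsub>B\<^esub> (gg \<otimes>\<^bsub>B\<^esub> w \<otimes>\<^bsub>B\<^esub> inv\<^bsub>B\<^esub> gg)"
      unfolding w_def using gg xc yc by (simp add: Bg.m_assoc)
    then show ?thesis using w1 gg yc unfolding x_def y_def by simp
  qed
  show ?thesis using gg main unfolding psi0_def by blast
qed

lemma bwd_case1:
  assumes condc: "\<forall>\<phi>' \<in> hom (AutH Mod NN) B.
           unique_factorization (Out HH) (Out G) B (\<lambda>C. Inn G <#>\<^bsub>B\<^esub> (j ` C)) (\<lambda>C. \<phi>' (NN <#>\<^bsub>AutH\<^esub> C))"
    and condd: "\<forall>\<phi> \<in> hom AutH B. Inn HH \<subseteq> kernel AutH B \<phi> \<longrightarrow> NN \<subseteq> kernel AutH B \<phi>"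
    and ph: "\<phi> \<in> hom AutH B" and kill1: "\<forall>h \<in> H. \<phi> (group_conj HH h) = \<one>\<^bsub>B\<^esub>"
  shows "unique_factorization AutH B B j \<phi>"
proof -
  have "Inn HH \<subseteq> kernel AutH B \<phi>"
  proof
    fix x assume "x \<in> Inn HH"
    then have "x \<in> group_conj HH ` H" unfolding Inn_def by simp
    then obtain h where h: "h \<in> H" "x = group_conj HH h" by blast
    then show "x \<in> kernel AutH B \<phi>" using kill1 conjH_closed[OF h(1)] unfolding kernel_def by simp
  qed
  then have "NN \<subseteq> kernel AutH B \<phi>" using condd ph by blast
  then have killN: "\<And>k. k \<in> NN \<Longrightarrow> \<phi> k = \<one>\<^bsub>B\<^esub>" unfolding kernel_def by blast
  define \<phi>' where "\<phi>' = (\<lambda>C. the_elem (\<phi> ` C))"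
  have ph'h: "\<phi>' \<in> hom (AutH Mod NN) B" unfolding \<phi>'_def
    using quotient_factor(1)[OF AH BG NN_normal ph killN] .
  have ph'ev: "\<phi>' (NN #>\<^bsub>AutH\<^esub> a) = \<phi> a" if "a \<in> carrier AutH" for a
    unfolding \<phi>'_def using quotient_factor(2)[OF AH BG NN_normal ph killN that] .
  have "unique_factorization (Out HH) (Out G) B (\<lambda>C. Inn G <#>\<^bsub>B\<^esub> (j ` C)) (\<lambda>C. \<phi>' (NN <#>\<^bsub>AutH\<^esub> C))"
    using condc ph'h by blast
  then obtain rho where rho: "rho \<in> hom (Out G) B"
    and rk: "\<forall>C \<in> carrier (Out HH). rho (Inn G <#>\<^bsub>B\<^esub> (j ` C)) = \<phi>' (NN <#>\<^bsub>AutH\<^esub> C)"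
    and un: "\<forall>rho' \<in> hom (Out G) B. (\<forall>C \<in> carrier (Out HH). rho' (Inn G <#>\<^bsub>B\<^esub> (j ` C)) = \<phi>' (NN <#>\<^bsub>AutH\<^esub> C))
               \<longrightarrow> (\<forall>z \<in> carrier (Out G). rho' z = rho z)"
    unfolding unique_factorization_def by blast
  have cosOut: "Inn HH #>\<^bsub>AutH\<^esub> a \<in> carrier (Out HH)" if "a \<in> carrier AutH" for a
    unfolding OutH_carrier using that by blast
  define psi where "psi = (\<lambda>b. rho (Inn G #>\<^bsub>B\<^esub> b))"
  have psih: "psi \<in> hom B B" unfolding psi_def
    using proj_hom rho by (rule Group.hom_compose[unfolded comp_def])
  show ?thesis
  proof (rule uf_intro[OF psih])
    fix a assume a: "a \<in> carrier AutH"
    have "rho (Inn G <#>\<^bsub>B\<^esub> (j ` (Inn HH #>\<^bsub>AutH\<^esub> a))) = \<phi>' (NN <#>\<^bsub>AutH\<^esub> (Inn HH #>\<^bsub>AutH\<^esub> a))"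
      using rk cosOut[OF a] by blast
    then show "psi (j a) = \<phi> a"
      unfolding k_coset[OF a] pi_coset[OF a] ph'ev[OF a] psi_def .
  next
    fix sig y assume sig: "sig \<in> hom B B" and sj: "\<forall>x \<in> carrier AutH. sig (j x) = \<phi> x"
      and y: "y \<in> carrier B"
    have ks: "sig (group_conj G h) = \<one>\<^bsub>B\<^esub>" if h: "h \<in> H" for h
      using sj conjH_closed[OF h] jconjH[OF h] kill1 h by metis
    have killI: "\<And>c. c \<in> Inn G \<Longrightarrow> sig c = \<one>\<^bsub>B\<^esub>" using killH[OF BG sig ks] .
    define sig' where "sig' = (\<lambda>C. the_elem (sig ` C))"
    have s'h: "sig' \<in> hom (Out G) B" unfolding sig'_def Out_def
      using quotient_factor(1)[OF BG BG InnG_normal sig killI] .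
    have s'ev: "sig' (Inn G #>\<^bsub>B\<^esub> b) = sig b" if "b \<in> carrier B" for b
      unfolding sig'_def using quotient_factor(2)[OF BG BG InnG_normal sig killI that] .
    have "\<forall>C \<in> carrier (Out HH). sig' (Inn G <#>\<^bsub>B\<^esub> (j ` C)) = \<phi>' (NN <#>\<^bsub>AutH\<^esub> C)"
    proof
      fix C assume "C \<in> carrier (Out HH)"
      then obtain a where a: "a \<in> carrier AutH" "C = Inn HH #>\<^bsub>AutH\<^esub> a" unfolding OutH_carrier by blast
      have ja: "j a \<in> carrier B" using group_hom.hom_closed[OF jgh a(1)] .
      have "sig (j a) = \<phi> a" using sj a(1) by blast
      then show "sig' (Inn G <#>\<^bsub>B\<^esub> (j ` C)) = \<phi>' (NN <#>\<^bsub>AutH\<^esub> C)"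
        unfolding a(2) k_coset[OF a(1)] pi_coset[OF a(1)] s'ev[OF ja] ph'ev[OF a(1)] .
    qed
    then have "\<forall>z \<in> carrier (Out G). sig' z = rho z" using un s'h by blast
    moreover have "Inn G #>\<^bsub>B\<^esub> y \<in> carrier (Out G)" unfolding OutG_carrier using y by blast
    ultimately have "sig' (Inn G #>\<^bsub>B\<^esub> y) = rho (Inn G #>\<^bsub>B\<^esub> y)" by blast
    then show "sig y = psi y" unfolding psi_def s'ev[OF y] .
  qed
qed

lemma bwd:
  assumes condb: "\<forall>\<theta> \<in> carrier (AutoGroup B). (\<forall>a \<in> carrier AutH. \<theta> (j a) = j a) \<longrightarrow> \<theta> = \<one>\<^bsub>AutoGroup B\<^esub>"
    and condc: "\<forall>\<phi>' \<in> hom (AutH Mod NN) B.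
           unique_factorization (Out HH) (Out G) B (\<lambda>C. Inn G <#>\<^bsub>B\<^esub> (j ` C)) (\<lambda>C. \<phi>' (NN <#>\<^bsub>AutH\<^esub> C))"
    and condd: "\<forall>\<phi> \<in> hom AutH B. Inn HH \<subseteq> kernel AutH B \<phi> \<longrightarrow> NN \<subseteq> kernel AutH B \<phi>"
  shows "localization AutH B j"
  unfolding localization_def
proof (intro conjI ballI)
  show "j \<in> hom AutH B" by (rule jhom)
  fix \<phi> assume ph: "\<phi> \<in> hom AutH B"
  show "unique_factorization AutH B B j \<phi>"
  proof (cases "\<forall>h \<in> H. \<phi> (group_conj HH h) = \<one>\<^bsub>B\<^esub>")
    case True
    then show ?thesis using bwd_case1[OF condc condd ph] by blast
  next
    case False
    then obtain h1 where h1: "h1 \<in> H" "\<phi> (group_conj HH h1) \<noteq> \<one>\<^bsub>B\<^esub>" by blast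
    obtain gg where gg: "gg \<in> carrier B" and ggj: "\<forall>a \<in> carrier AutH. group_conj B gg (j a) = \<phi> a"
      using case2_data[OF ph h1] by blast
    have h0: "group_conj B gg \<in> hom B B"
      using group.Aut_elem(1)[OF BG group.conj_closed[OF BG gg]] .
    show ?thesis
    proof (rule uf_intro[OF h0])
      fix a assume "a \<in> carrier AutH" then show "group_conj B gg (j a) = \<phi> a" using ggj by blast
    next
      fix sig y assume sig: "sig \<in> hom B B" and sj: "\<forall>x \<in> carrier AutH. sig (j x) = \<phi> x"
        and y: "y \<in> carrier B"
      have "\<And>a. a \<in> carrier AutH \<Longrightarrow> sig (j a) = group_conj B gg (j a)" using sj ggj by simp
      then show "sig y = group_conj B gg y" using case2_unique[OF condb gg sig _ y] by blast
    qed
  qed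
qed

lemma complete_b:
  assumes cB: "complete_group B"
  shows "\<forall>\<theta> \<in> carrier (AutoGroup B). (\<forall>a \<in> carrier AutH. \<theta> (j a) = j a) \<longrightarrow> \<theta> = \<one>\<^bsub>AutoGroup B\<^esub>"
proof (intro ballI impI)
  interpret Bg: group B by (rule BG)
  interpret G: group G by (rule G)
  fix \<theta> assume th: "\<theta> \<in> carrier (AutoGroup B)" and fx: "\<forall>a \<in> carrier AutH. \<theta> (j a) = j a"
  have "\<theta> \<in> Inn B" using cB th unfolding complete_group_def by blast
  then obtain \<beta> where \<beta>: "\<beta> \<in> carrier B" "\<theta> = group_conj B \<beta>" unfolding Inn_def by blast
  have "\<beta> h = h" if h: "h \<in> H" for h
  proof -
    have hc: "h \<in> carrier G" using h Hc by blast
    have "\<theta> (group_conj G h) = group_conj G h"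
      using fx conjH_closed[OF h] jconjH[OF h] by metis
    moreover have "\<theta> (group_conj G h) = group_conj G (\<beta> h)"
      unfolding \<beta>(2) using Bg.conj_app[OF G.conj_closed[OF hc]] G.conj_action[OF \<beta>(1) hc] by simp
    ultimately show ?thesis using conjG_eq G.Aut_app_closed[OF \<beta>(1) hc] hc by metis
  qed
  then have "\<beta> = \<one>\<^bsub>B\<^esub>" using loc_fix[OF G subH locH \<beta>(1)] by blast
  then show "\<theta> = \<one>\<^bsub>AutoGroup B\<^esub>" unfolding \<beta>(2) by (simp add: Bg.conj_one)
qed

lemma main:
  "(localization AutH B j \<longleftrightarrow>
     (\<forall>\<theta> \<in> carrier (AutoGroup B). (\<forall>a \<in> carrier AutH. \<theta> (j a) = j a) \<longrightarrow> \<theta> = \<one>\<^bsub>AutoGroup B\<^esub>) \<and>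
     (\<forall>\<phi>' \<in> hom (AutH Mod NN) B.
           unique_factorization (Out HH) (Out G) B (\<lambda>C. Inn G <#>\<^bsub>B\<^esub> (j ` C)) (\<lambda>C. \<phi>' (NN <#>\<^bsub>AutH\<^esub> C))) \<and>
     (\<forall>\<phi> \<in> hom AutH B. Inn HH \<subseteq> kernel AutH B \<phi> \<longrightarrow> NN \<subseteq> kernel AutH B \<phi>))
   \<and> (complete_group B \<longrightarrow> (localization AutH B j \<longleftrightarrow>
     (\<forall>\<phi>' \<in> hom (AutH Mod NN) B.
           unique_factorization (Out HH) (Out G) B (\<lambda>C. Inn G <#>\<^bsub>B\<^esub> (j ` C)) (\<lambda>C. \<phi>' (NN <#>\<^bsub>AutH\<^esub> C))) \<and>
     (\<forall>\<phi> \<in> hom AutH B. Inn HH \<subseteq> kernel AutH B \<phi> \<longrightarrow> NN \<subseteq> kernel AutH B \<phi>)))"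
  using fwd_b fwd_c fwd_d bwd complete_b by blast

end

theorem theorem3p5:
  fixes G :: "'a monoid" and H :: "'a set"
    and j :: "('a \<Rightarrow> 'a) \<Rightarrow> ('a \<Rightarrow> 'a)"
  assumes grpG: "group G"
    and subH: "subgroup H G"
    and simpH: "simple_grp (G\<lparr>carrier := H\<rparr>)" and nabH: "nonabelian (G\<lparr>carrier := H\<rparr>)"
    and simpG: "simple_grp G" and nabG: "nonabelian G"
    and locH: "localization (G\<lparr>carrier := H\<rparr>) G (\<lambda>x. x)"
    and chG: "cohopfian G" and chAutG: "cohopfian (AutoGroup G)"
    and complAutH: "complete_group (AutoGroup (G\<lparr>carrier := H\<rparr>))"
    and hypOut: "hyperabelian (Out G)"
    and jhom: "j \<in> hom (AutoGroup (G\<lparr>carrier := H\<rparr>)) (AutoGroup G)"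
    and jinj: "inj_on j (carrier (AutoGroup (G\<lparr>carrier := H\<rparr>)))"
    and jconj: "\<forall>h \<in> H. j (group_conj (G\<lparr>carrier := H\<rparr>) h) = group_conj G h"
  shows
   "let HH = G\<lparr>carrier := H\<rparr>;
        AutH = AutoGroup HH;
        AutG = AutoGroup G;
        N = {a \<in> carrier AutH. j a \<in> Inn G};
        k = (\<lambda>C. Inn G <#>\<^bsub>AutG\<^esub> (j ` C));
        \<pi> = (\<lambda>C. N <#>\<^bsub>AutH\<^esub> C);
        cond_b = (\<forall>\<theta> \<in> carrier (AutoGroup AutG).
                    (\<forall>a \<in> carrier AutH. \<theta> (j a) = j a) \<longrightarrow> \<theta> = \<one>\<^bsub>AutoGroup AutG\<^esub>);
        cond_c = (\<forall>\<phi>' \<in> hom (AutH Mod N) AutG.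
                    unique_factorization (Out HH) (Out G) AutG k (\<lambda>C. \<phi>' (\<pi> C)));
        cond_d = (\<forall>\<phi> \<in> hom AutH AutG.
                    Inn HH \<subseteq> kernel AutH AutG \<phi> \<longrightarrow> N \<subseteq> kernel AutH AutG \<phi>)
    in (localization AutH AutG j \<longleftrightarrow> cond_b \<and> cond_c \<and> cond_d)
       \<and> (complete_group AutG \<longrightarrow> (localization AutH AutG j \<longleftrightarrow> cond_c \<and> cond_d))"
  proof -
  interpret s: setting G H j
    by (rule setting.intro[OF grpG subH simpH nabH simpG nabG locH chG chAutG hypOut jhom jinj jconj])
  show ?thesis unfolding Let_def by (rule s.main)
qed

end
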